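(* For all $n\in\mathbb N$ the following hold in the $q$-shuffle algebra $\mathbb V$: $$\sum_{k=0}^n G_{n-k}\star W_{-k}\,q^{2k-n}=\sum_{k=0}^n W_{-k}\star G_{n-k}\,q^{n-2k},$$ $$\sum_{k=0}^n G_{n-k}\star W_{k+1}\,q^{n-2k}=\sum_{k=0}^n W_{k+1}\star G_{n-k}\,q^{2k-n},$$ $$\sum_{k=0}^n \tilde G_{n-k}\star W_{-k}\,q^{n-2k}=\sum_{k=0}^n W_{-k}\star \tilde G_{n-k}\,q^{2k-n},$$ $$\sum_{k=0}^n \tilde G_{n-k}\star W_{k+1}\,q^{2k-n}=\sum_{k=0}^n W_{k+1}\star \tilde G_{n-k}\,q^{n-2k}.$$
   Context: Let $\mathbb F$ be a field and let $q\in\mathbb F$ be nonzero and not a root of unity. Let $\mathbb V$ be the free associative $\mathbb F$-algebra on noncommuting $x,y$, with basis the words (including $1$). Juxtaposition denotes concatenation. Set $\langle x,x\rangle=\langle y,y\rangle=2$ and $\langle x,y\rangle=\langle y,x\rangle=-2$. The $q$-shuffle product $\star$ is the bilinear product determined as follows: - $1\star v=v\star 1=v$; - for nontrivial words $u=u_1\cdots u_r$ and $v=v_1\cdots v_s$, $$u\star v=u_1((u_2\cdots u_r)\star v)+v_1(u\star(v_2\cdots v_s))q^{\langle u_1,v_1\rangle+\cdots+\langle u_r,v_1\rangle}.$$ This makes $\mathbb V$ an associative algebra, the $q$-shuffle algebra. For $k\in\mathbb N$: - $W_{-k}=xyx\cdots x$ is the alternating word of length $2k+1$ beginning and ending with $x$;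 - $W_{k+1}=yxy\cdots y$ is the alternating word of length $2k+1$ beginning and ending with $y$; - $G_k=yxyx\cdots yx$ is the word of length $2k$; - $\tilde G_k=xyxy\cdots xy$ is the word of length $2k$; - $G_0=\tilde G_0=1$. *)

theory Defs
  imports Main
begin

text \<open>Letters of the free algebra V on x, y; words are letter lists.
  An element of V is represented by its coefficient function word => 'a
  (all elements occurring below are finitely supported).\<close>

datatype letter = X | Y

type_synonym word = "letter list"

definition bracket :: "letter \<Rightarrow> letter \<Rightarrow> int" where
  "bracket a b = (if a = b then 2 else -2)"

definition wvec :: "word \<Rightarrow> word \<Rightarrow> 'a::zero_neq_one" where
  "wvec u = (\<lambda>w. if w = u then 1 else 0)"

text \<open>Left concatenation by a letter, extended linearly.\<close>
definition lpre :: "letter \<Rightarrow> (word \<Rightarrow> 'a::zero) \<Rightarrow> word \<Rightarrow> 'a" where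
  "lpre a f = (\<lambda>w. case w of [] \<Rightarrow> 0 | b # w' \<Rightarrow> (if b = a then f w' else 0))"

function qsh :: "'a::field \<Rightarrow> word \<Rightarrow> word \<Rightarrow> word \<Rightarrow> 'a" where
  "qsh q [] v = wvec v"
| "qsh q (a # u) [] = wvec (a # u)"
| "qsh q (a # u) (b # v) =
     (\<lambda>w. lpre a (qsh q u (b # v)) w
        + lpre b (qsh q (a # u) v) w * q powi (\<Sum>c\<leftarrow>a # u. bracket c b))"
  by pat_completeness auto
termination by (relation "measure (\<lambda>(q, u, v). length u + length v)") auto

definition Wneg :: "nat \<Rightarrow> word" where
  "Wneg k = map (\<lambda>i. if even i then X else Y) [0..<2*k+1]"
definition Wpos :: "nat \<Rightarrow> word" where   \<comment> \<open>W_{k+1} = yxy...y, length 2k+1\<close>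
  "Wpos k = map (\<lambda>i. if even i then Y else X) [0..<2*k+1]"
definition G :: "nat \<Rightarrow> word" where
  "G k = map (\<lambda>i. if even i then Y else X) [0..<2*k]"
definition Gt :: "nat \<Rightarrow> word" where
  "Gt k = map (\<lambda>i. if even i then X else Y) [0..<2*k]"

end

theory Submission
  imports Defs
begin

lemma sum_reflect: "(\<Sum>k\<le>(n::nat). f k) = (\<Sum>k\<le>n. f (n - k))"
  using sum.atLeastAtMost_rev[of f 0 n] by (simp add: atMost_atLeast0)

lemma qsh_nil_right: "qsh q u [] = wvec u"
  by (cases u) auto

lemma qsh_cons_cons:
  "qsh q (a # u) (b # v) (c # w) =
     (if a = c then qsh q u (b # v) w else 0)
   + (if b = c then qsh q (a # u) v w * q powi (\<Sum>d\<leftarrow>a # u. bracket d b) else 0)"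
  by (simp add: lpre_def)

lemma qsh_cons_cons_nil: "qsh q (a # u) (b # v) [] = 0"
  by (simp add: lpre_def)

lemma qsh_len: "qsh q u v w \<noteq> 0 \<Longrightarrow> length w = length u + length v"
proof (induction q u v arbitrary: w rule: qsh.induct)
  case (1 q v)
  then show ?case by (simp add: wvec_def split: if_splits)
next
  case (2 q a u)
  then show ?case by (simp add: wvec_def split: if_splits)
next
  case (3 q a u b v)
  show ?case
  proof (cases w)
    case Nil
    then show ?thesis using 3 by (simp add: lpre_def)
  next
    case (Cons c w')
    have h: "qsh q (a#u) (b#v) (c#w') \<noteq> 0" using 3(3) Cons by simp
    show ?thesis using h 3(1,2) Cons unfolding qsh_cons_cons
      by (cases "qsh q u (b#v) w' = 0") (auto split: if_splits)
  qed
qed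

definition sw :: "letter \<Rightarrow> letter" where "sw c = (if c = X then Y else X)"

lemma bracket_sw: "bracket (sw a) (sw b) = bracket a b"
  by (cases a; cases b) (auto simp: bracket_def sw_def)

lemma sw_eq: "(sw a = sw b) = (a = b)"
  by (cases a; cases b) (auto simp: sw_def)

lemma inj_sw: "inj sw"
  unfolding inj_def using sw_eq by blast

lemma map_sw_eq: "(map sw u = map sw v) = (u = v)"
  using inj_map_eq_map[OF inj_sw] .

lemma sum_list_sw: "(\<Sum>d\<leftarrow>map sw u. bracket d (sw b)) = (\<Sum>d\<leftarrow>u. bracket d b)"
  by (induction u) (auto simp: bracket_sw)

lemma qsh_swap: "qsh q (map sw u) (map sw v) (map sw w) = qsh q u v w"
proof (induction q u v arbitrary: w rule: qsh.induct)
  case (1 q v)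
  then show ?case by (simp add: wvec_def map_sw_eq)
next
  case (2 q a u)
  then show ?case by (simp only: list.map(1) qsh_nil_right) (simp add: wvec_def map_sw_eq del: list.map)
next
  case (3 q a u b v)
  show ?case
  proof (cases w)
    case Nil
    then show ?thesis by (simp add: qsh_cons_cons_nil del: qsh.simps)
  next
    case (Cons c w')
    have "qsh q (map sw (a # u)) (map sw (b # v)) (map sw w)
      = (if sw a = sw c then qsh q (map sw u) (map sw (b # v)) (map sw w') else 0)
   + (if sw b = sw c then qsh q (map sw (a # u)) (map sw v) (map sw w') * q powi (\<Sum>d\<leftarrow>map sw (a # u). bracket d (sw b)) else 0)"
      using Cons by (simp only: list.map qsh_cons_cons)
    also have "\<dots> = qsh q (a # u) (b # v) w"
      using Cons 3 by (simp only: sw_eq sum_list_sw qsh_cons_cons)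
    finally show ?thesis .
  qed
qed

lemma bracket_sym: "bracket a b = bracket b a"
  by (simp add: bracket_def eq_commute)

lemma qsh_nil_left_eq: "qsh q [] v w = (if w = v then 1 else 0)"
  by (simp add: wvec_def)

lemma qsh_nil_right_eq: "qsh q u [] w = (if w = u then 1 else 0)"
  by (simp add: qsh_nil_right wvec_def)

lemma qsh_snoc:
  assumes q: "q \<noteq> 0"
  shows "qsh q (u @ [a]) (v @ [b]) (w @ [c]) =
     (if a = c then qsh q u (v @ [b]) w * q powi (\<Sum>d\<leftarrow>v @ [b]. bracket a d) else 0)
   + (if b = c then qsh q (u @ [a]) v w else 0)"
proof (induction w arbitrary: u v)
  case Nil
  have "qsh q (u @ [a]) (v @ [b]) [c] = 0" using qsh_len[of q "u @ [a]" "v @ [b]" "[c]"] by auto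
  moreover have "qsh q u (v @ [b]) [] = 0" using qsh_len[of q u "v @ [b]" "[]"] by auto
  moreover have "qsh q (u @ [a]) v [] = 0" using qsh_len[of q "u @ [a]" v "[]"] by auto
  ultimately show ?case by simp
next
  case (Cons d w)
  consider "u = []" "v = []" | a0 u0 where "u = a0 # u0" "v = []"
    | b0 v0 where "u = []" "v = b0 # v0" | a0 u0 b0 v0 where "u = a0 # u0" "v = b0 # v0"
    by (cases u; cases v) auto
  then show ?case
  proof cases
    case 1
    then show ?thesis using q
      apply (simp only: append_Cons append_Nil qsh_cons_cons qsh_nil_right_eq qsh_nil_left_eq)
    apply (cases "a = d"; cases "b = d"; cases "a = c"; cases "b = c")
    apply ((simp_all add: power_int_add[symmetric] bracket_sym del: qsh.simps)?)
    apply ((simp_all add: distrib_right distrib_left power_int_add[symmetric] del: qsh.simps)?)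
    apply ((simp_all add: add_ac mult.commute del: qsh.simps)?)
    done
  next
    case (2 a0 u0)
    then show ?thesis using Cons.IH[of u0 "[]"] q
      apply (simp only: append_Cons append_Nil qsh_cons_cons qsh_nil_right_eq qsh_nil_left_eq)
    apply (cases "a0 = d"; cases "b = d"; cases "a = c"; cases "b = c")
    apply ((simp_all add: power_int_add[symmetric] bracket_sym del: qsh.simps)?)
    apply ((simp_all add: distrib_right distrib_left power_int_add[symmetric] del: qsh.simps)?)
    apply ((simp_all add: add_ac mult.commute del: qsh.simps)?)
    done
  next
    case (3 b0 v0)
    then show ?thesis using Cons.IH[of "[]" v0] q
      apply (simp only: append_Cons append_Nil qsh_cons_cons qsh_nil_right_eq qsh_nil_left_eq)
    apply (cases "a = d"; cases "b0 = d"; cases "a = c"; cases "b = c")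
    apply ((simp_all add: power_int_add[symmetric] bracket_sym del: qsh.simps)?)
    apply ((simp_all add: distrib_right distrib_left power_int_add[symmetric] del: qsh.simps)?)
    apply ((simp_all add: add_ac mult.commute del: qsh.simps)?)
    done
  next
    case (4 a0 u0 b0 v0)
    then show ?thesis using Cons.IH[of u0 v] Cons.IH[of u v0] q
      apply (simp only: append_Cons append_Nil qsh_cons_cons qsh_nil_right_eq qsh_nil_left_eq)
    apply (cases "a0 = d"; cases "b0 = d"; cases "a = c"; cases "b = c")
    apply ((simp_all add: power_int_add[symmetric] bracket_sym del: qsh.simps)?)
    apply ((simp_all add: distrib_right distrib_left power_int_add[symmetric] del: qsh.simps)?)
    apply ((simp_all add: add_ac mult.commute del: qsh.simps)?)
    done
  qed
qed

lemma sum_list_map_rev: "(\<Sum>d\<leftarrow>rev xs. (f d :: int)) = (\<Sum>d\<leftarrow>xs. f d)"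
  by (induction xs) auto

lemma qsh_rev:
  assumes q: "q \<noteq> 0"
  shows "qsh q u v w = qsh q (rev v) (rev u) (rev w)"
proof (induction w arbitrary: u v)
  case Nil
  show ?case
  proof (cases "u = [] \<or> v = []")
    case True
    then show ?thesis by (auto simp: qsh_nil_right_eq qsh_nil_left_eq simp del: qsh.simps)
  next
    case False
    then obtain a u' b v' where uv: "u = a # u'" "v = b # v'" by (cases u; cases v) auto
    have "qsh q (rev v) (rev u) [] = 0" using qsh_len[of q "rev v" "rev u" "[]"] uv by auto
    then show ?thesis using uv by (simp add: qsh_cons_cons_nil del: qsh.simps)
  qed
next
  case (Cons c w)
  show ?case
  proof (cases "u = [] \<or> v = []")
    case True
    then show ?thesis by (auto simp: qsh_nil_right_eq qsh_nil_left_eq simp del: qsh.simps)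
      (metis rev.simps(2) rev_rev_ident)+
  next
    case False
    then obtain a u' b v' where uv: "u = a # u'" "v = b # v'" by (cases u; cases v) auto
    have "qsh q (rev v) (rev u) (rev (c # w)) = qsh q (rev v' @ [b]) (rev u' @ [a]) (rev w @ [c])"
      using uv by simp
    also have "\<dots> = (if b = c then qsh q (rev v') (rev u' @ [a]) (rev w) * q powi (\<Sum>d\<leftarrow>rev u' @ [a]. bracket b d) else 0)
   + (if a = c then qsh q (rev v' @ [b]) (rev u') (rev w) else 0)"
      by (rule qsh_snoc[OF q])
    also have "\<dots> = (if a = c then qsh q u' (b # v') w else 0)
   + (if b = c then qsh q (a # u') v' w * q powi (\<Sum>d\<leftarrow>a # u'. bracket d b) else 0)"
      using Cons.IH[of u' "b # v'"] Cons.IH[of "a # u'" v']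
      by (simp add: sum_list_map_rev bracket_sym add.commute del: qsh.simps)
    also have "\<dots> = qsh q u v (c # w)" using uv by (simp only: qsh_cons_cons)
    finally show ?thesis by simp
  qed
qed

lemma G_0[simp]: "G 0 = []" and Gt_0[simp]: "Gt 0 = []"
  by (simp_all add: G_def Gt_def)

lemma upt_Suc_shift: "[0..<Suc n] = 0 # map Suc [0..<n]"
  by (simp add: upt_conv_Cons map_Suc_upt)

lemma upt_add1_shift: "[0..<n+1] = 0 # map Suc [0..<n]"
  using upt_Suc_shift by simp

lemma G_Suc: "G (Suc m) = Y # Wneg m"
  by (rule nth_equalityI) (auto simp: nth_Cons' G_def Wneg_def simp del: upt_Suc)

lemma Wneg_eq: "Wneg k = X # G k"
  by (rule nth_equalityI) (auto simp: nth_Cons' G_def Wneg_def simp del: upt_Suc)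

lemma Gt_Suc: "Gt (Suc m) = X # Wpos m"
  by (rule nth_equalityI) (auto simp: nth_Cons' Gt_def Wpos_def simp del: upt_Suc)

lemma Wpos_eq: "Wpos k = Y # Gt k"
  by (rule nth_equalityI) (auto simp: nth_Cons' Gt_def Wpos_def simp del: upt_Suc)

lemma map_sw_G: "map sw (G m) = Gt m"
  unfolding G_def Gt_def by (simp add: sw_def)

lemma map_sw_Gt: "map sw (Gt m) = G m"
  unfolding G_def Gt_def by (simp add: sw_def)

lemma map_sw_Wneg: "map sw (Wneg m) = Wpos m"
  unfolding Wneg_def Wpos_def by (simp add: sw_def)

lemma map_sw_Wpos: "map sw (Wpos m) = Wneg m"
  unfolding Wneg_def Wpos_def by (simp add: sw_def)

lemma sw_sw: "sw (sw a) = a"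
  by (cases a) (auto simp: sw_def)

lemma map_sw_sw: "map sw (map sw w) = w"
  by (induction w) (auto simp: sw_sw)

lemma rev_Gt: "rev (Gt m) = G m"
  by (rule nth_equalityI) (auto simp: G_def Gt_def rev_nth)

lemma rev_Wneg: "rev (Wneg m) = Wneg m"
  by (rule nth_equalityI) (auto simp: Wneg_def rev_nth simp del: upt_Suc)

lemma bracket_YX: "bracket Y c + (bracket X c + s) = s"
  by (cases c) (auto simp: bracket_def)

lemma bracket_YX0: "bracket Y c + bracket X c = 0"
  by (cases c) (auto simp: bracket_def)

lemma sum_G: "(\<Sum>d\<leftarrow>G m. bracket d c) = 0"
  by (induction m) (simp_all add: G_Suc Wneg_eq bracket_YX bracket_YX0)

lemma sum_Wneg_X: "(\<Sum>d\<leftarrow>Wneg m. bracket d X) = 2"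
  by (simp only: Wneg_eq list.map sum_list.Cons sum_G) (simp add: bracket_def)

lemma sum_Wneg_Y: "(\<Sum>d\<leftarrow>Wneg m. bracket d Y) = -2"
  by (simp only: Wneg_eq list.map sum_list.Cons sum_G) (simp add: bracket_def)

lemma L1: "qsh q (G m) (Wneg k) (X # w) = qsh q (G m) (G k) w"
  by (cases m) (simp_all add: G_Suc Wneg_eq bracket_YX bracket_YX0 sum_G qsh_cons_cons qsh_nil_left_eq del: qsh.simps)

lemma L2: "qsh q (Wneg k) (G m) (X # w) = qsh q (G k) (G m) w"
  by (cases m) (simp_all add: G_Suc Wneg_eq bracket_YX bracket_YX0 sum_G qsh_cons_cons qsh_nil_right_eq del: qsh.simps)

lemma L3a: "qsh q (G (Suc m)) (Wneg k) (Y # w) = qsh q (Wneg m) (Wneg k) w"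
  by (simp add: G_Suc Wneg_eq bracket_YX bracket_YX0 sum_G qsh_cons_cons del: qsh.simps)

lemma L3b: "qsh q (G 0) (Wneg k) (Y # w) = 0"
  by (simp add: Wneg_eq qsh_nil_left_eq del: qsh.simps)

lemma L4a: "qsh q (Wneg k) (G (Suc m)) (Y # w) = qsh q (Wneg k) (Wneg m) w * q powi (-2)"
proof -
  have "qsh q (Wneg k) (G (Suc m)) (Y # w) = qsh q (Wneg k) (Wneg m) w * q powi (\<Sum>d\<leftarrow>Wneg k. bracket d Y)"
    by (simp add: G_Suc Wneg_eq[of k] qsh_cons_cons del: qsh.simps)
  then show ?thesis by (simp add: sum_Wneg_Y)
qed

lemma L4b: "qsh q (Wneg k) (G 0) (Y # w) = 0"
  by (simp add: Wneg_eq qsh_nil_right_eq del: qsh.simps)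

lemma qsh_G_Wneg_nil: "qsh q (G m) (Wneg k) [] = 0"
  using qsh_len[of q "G m" "Wneg k" "[]"] by (auto simp: Wneg_def)

lemma qsh_Wneg_G_nil: "qsh q (Wneg k) (G m) [] = 0"
  using qsh_len[of q "Wneg k" "G m" "[]"] by (auto simp: Wneg_def)

lemma id1:
  assumes q: "q \<noteq> 0"
  shows "(\<Sum>k\<le>n. qsh q (G (n-k)) (Wneg k) w * q powi (2*int k - int n))
       = (\<Sum>k\<le>n. qsh q (Wneg k) (G (n-k)) w * q powi (int n - 2*int k))"
proof (cases w)
  case Nil
  then show ?thesis by (simp add: qsh_G_Wneg_nil qsh_Wneg_G_nil del: qsh.simps)
next
  case (Cons c w')
  show ?thesis
  proof (cases c)
    case X
    have "(\<Sum>k\<le>n. qsh q (Wneg k) (G (n-k)) w * q powi (int n - 2*int k))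
        = (\<Sum>k\<le>n. qsh q (G k) (G (n-k)) w' * q powi (int n - 2*int k))"
      using Cons X by (simp add: L2 del: qsh.simps)
    also have "\<dots> = (\<Sum>k\<le>n. qsh q (G (n-k)) (G (n-(n-k))) w' * q powi (int n - 2*int (n-k)))"
      by (rule sum_reflect)
    also have "\<dots> = (\<Sum>k\<le>n. qsh q (G (n-k)) (G k) w' * q powi (2*int k - int n))"
      by (rule sum.cong) (auto simp: of_nat_diff)
    also have "\<dots> = (\<Sum>k\<le>n. qsh q (G (n-k)) (Wneg k) w * q powi (2*int k - int n))"
      using Cons X by (simp add: L1 del: qsh.simps)
    finally show ?thesis by simp
  next
    case Y
    show ?thesis
    proof (cases n)
      case 0
      then show ?thesis using Cons Y by (simp add: qsh_nil_left_eq qsh_nil_right_eq Wneg_eq del: qsh.simps)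
    next
      case (Suc n')
      have "(\<Sum>k\<le>n. qsh q (Wneg k) (G (n-k)) w * q powi (int n - 2*int k))
          = (\<Sum>k\<le>n'. qsh q (Wneg k) (G (Suc (n'-k))) w * q powi (int n - 2*int k))"
        using Cons Y Suc by (simp add: qsh_nil_right_eq Wneg_eq Suc_diff_le del: qsh.simps)
      also have "\<dots> = (\<Sum>k\<le>n'. qsh q (Wneg k) (Wneg (n'-k)) w' * (q powi (-2) * q powi (int n - 2*int k)))"
        using Cons Y by (simp add: L4a mult.assoc del: qsh.simps)
      also have "\<dots> = (\<Sum>k\<le>n'. qsh q (Wneg k) (Wneg (n'-k)) w' * q powi (int n - 2 - 2*int k))"
        using q by (simp add: power_int_add[symmetric] algebra_simps del: qsh.simps)
      also have "\<dots> = (\<Sum>k\<le>n'. qsh q (Wneg (n'-k)) (Wneg (n'-(n'-k))) w' * q powi (int n - 2 - 2*int (n'-k)))"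
        by (rule sum_reflect)
      also have "\<dots> = (\<Sum>k\<le>n'. qsh q (Wneg (n'-k)) (Wneg k) w' * q powi (2*int k - int n))"
        by (rule sum.cong) (auto simp: of_nat_diff Suc algebra_simps)
      also have "\<dots> = (\<Sum>k\<le>n'. qsh q (G (Suc (n'-k))) (Wneg k) w * q powi (2*int k - int n))"
        using Cons Y by (simp add: L3a del: qsh.simps)
      also have "\<dots> = (\<Sum>k\<le>n. qsh q (G (n-k)) (Wneg k) w * q powi (2*int k - int n))"
        using Cons Y Suc by (simp add: qsh_nil_left_eq Wneg_eq Suc_diff_le del: qsh.simps)
      finally show ?thesis by simp
    qed
  qed
qed

lemma R1: "q \<noteq> 0 \<Longrightarrow> qsh q (Gt m) (Wneg k) w = qsh q (Wneg k) (G m) (rev w)"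
  using qsh_rev[of q "Gt m" "Wneg k" w] by (simp add: rev_Gt rev_Wneg)

lemma R2: "q \<noteq> 0 \<Longrightarrow> qsh q (Wneg k) (Gt m) w = qsh q (G m) (Wneg k) (rev w)"
  using qsh_rev[of q "Wneg k" "Gt m" w] by (simp add: rev_Gt rev_Wneg)

lemma S1: "qsh q (Gt m) (Wpos k) w = qsh q (G m) (Wneg k) (map sw w)"
  using qsh_swap[of q "G m" "Wneg k" "map sw w"] by (simp only: map_sw_G map_sw_Wneg map_sw_sw)

lemma S2: "qsh q (Wpos k) (Gt m) w = qsh q (Wneg k) (G m) (map sw w)"
  using qsh_swap[of q "Wneg k" "G m" "map sw w"] by (simp only: map_sw_G map_sw_Wneg map_sw_sw)

lemma S3: "qsh q (G m) (Wpos k) w = qsh q (Gt m) (Wneg k) (map sw w)"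
  using qsh_swap[of q "Gt m" "Wneg k" "map sw w"] by (simp only: map_sw_Gt map_sw_Wneg map_sw_sw)

lemma S4: "qsh q (Wpos k) (G m) w = qsh q (Wneg k) (Gt m) (map sw w)"
  using qsh_swap[of q "Wneg k" "Gt m" "map sw w"] by (simp only: map_sw_Gt map_sw_Wneg map_sw_sw)

lemma id3:
  assumes q: "q \<noteq> 0"
  shows "(\<Sum>k\<le>n. qsh q (Gt (n-k)) (Wneg k) w * q powi (int n - 2*int k))
       = (\<Sum>k\<le>n. qsh q (Wneg k) (Gt (n-k)) w * q powi (2*int k - int n))"
  using id1[OF q, of n "rev w"] by (simp add: R1[OF q] R2[OF q] del: qsh.simps)

theorem proposition6p3:
  fixes q :: "'a::field" and n :: nat
  assumes "q \<noteq> 0" and "\<forall>m::nat. m > 0 \<longrightarrow> q ^ m \<noteq> 1"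
  shows "((\<lambda>w. \<Sum>k\<le>n. qsh q (G (n-k)) (Wneg k) w * q powi (2*int k - int n))
           = (\<lambda>w. \<Sum>k\<le>n. qsh q (Wneg k) (G (n-k)) w * q powi (int n - 2*int k))) \<and>
      ((\<lambda>w. \<Sum>k\<le>n. qsh q (G (n-k)) (Wpos k) w * q powi (int n - 2*int k))
           = (\<lambda>w. \<Sum>k\<le>n. qsh q (Wpos k) (G (n-k)) w * q powi (2*int k - int n))) \<and>
      ((\<lambda>w. \<Sum>k\<le>n. qsh q (Gt (n-k)) (Wneg k) w * q powi (int n - 2*int k))
           = (\<lambda>w. \<Sum>k\<le>n. qsh q (Wneg k) (Gt (n-k)) w * q powi (2*int k - int n))) \<and>
      ((\<lambda>w. \<Sum>k\<le>n. qsh q (Gt (n-k)) (Wpos k) w * q powi (2*int k - int n))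
           = (\<lambda>w. \<Sum>k\<le>n. qsh q (Wpos k) (Gt (n-k)) w * q powi (int n - 2*int k)))"
proof (intro conjI)
  show "(\<lambda>w. \<Sum>k\<le>n. qsh q (G (n-k)) (Wneg k) w * q powi (2*int k - int n))
           = (\<lambda>w. \<Sum>k\<le>n. qsh q (Wneg k) (G (n-k)) w * q powi (int n - 2*int k))"
    using id1[OF assms(1)] by blast
  show "(\<lambda>w. \<Sum>k\<le>n. qsh q (G (n-k)) (Wpos k) w * q powi (int n - 2*int k))
           = (\<lambda>w. \<Sum>k\<le>n. qsh q (Wpos k) (G (n-k)) w * q powi (2*int k - int n))"
    using id3[OF assms(1)] by (simp add: S3 S4 del: qsh.simps)
  show "(\<lambda>w. \<Sum>k\<le>n. qsh q (Gt (n-k)) (Wneg k) w * q powi (int n - 2*int k))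
           = (\<lambda>w. \<Sum>k\<le>n. qsh q (Wneg k) (Gt (n-k)) w * q powi (2*int k - int n))"
    using id3[OF assms(1)] by blast
  show "(\<lambda>w. \<Sum>k\<le>n. qsh q (Gt (n-k)) (Wpos k) w * q powi (2*int k - int n))
           = (\<lambda>w. \<Sum>k\<le>n. qsh q (Wpos k) (Gt (n-k)) w * q powi (int n - 2*int k))"
    using id1[OF assms(1)] by (simp add: S1 S2 del: qsh.simps)
qed

end
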